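(* Let $\alpha,\beta,\mu$ be real parameters with $0<\alpha\leq 1$, $\beta>0$, $0<\mu\leq 1$ and $\beta\neq\mu$. Define $W_0:\mathbb{R}^2_+\to\mathbb{R}^2_+$ by $$W_0(x,y)=\left(\beta y-\frac{\alpha x}{1+x}+x,\ \frac{\alpha x}{1+x}-\mu y+y\right).$$ Then for every integer $p\geq 2$, $W_0$ has no point of prime period $p$ in $\mathbb{R}^2_+$; i.e., every $z\in\mathbb{R}^2_+$ with $W_0^p(z)=z$ for some $p\geq 1$ is a fixed point of $W_0$.
   Context: $\mathbb{R}^2_+=\{(x,y)\in\mathbb{R}^2: x\geq 0,\ y\geq 0\}$; under the stated conditions $W_0$ maps $\mathbb{R}^2_+$ into itself. $W_0^p$ denotes the $p$-th iterate. A point $z$ is periodic if $W_0^p(z)=z$ for some $p\geq1$; the smallest such $p$ is its prime (least) period. *)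

theory Defs
  imports Complex_Main
begin

definition W0 :: "real \<Rightarrow> real \<Rightarrow> real \<Rightarrow> real \<times> real \<Rightarrow> real \<times> real" where
  "W0 \<alpha> \<beta> \<mu> z = (let x = fst z; y = snd z in
     (\<beta> * y - \<alpha> * x / (1 + x) + x, \<alpha> * x / (1 + x) - \<mu> * y + y))"

end

theory Submission
  imports Defs
begin

lemma W0_quad:
  assumes "0 < \<alpha>" "\<alpha> \<le> 1" "0 < \<beta>" "0 < \<mu>" "\<mu> \<le> 1" "0 \<le> fst z" "0 \<le> snd z"
  shows "0 \<le> fst (W0 \<alpha> \<beta> \<mu> z) \<and> 0 \<le> snd (W0 \<alpha> \<beta> \<mu> z)"
proof -
  obtain x y where z: "z = (x, y)" by (cases z)
  have x: "0 \<le> x" and y: "0 \<le> y" using assms z by auto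
  have "x - \<alpha> * x / (1 + x) = x * (1 + x - \<alpha>) / (1 + x)" using x by (simp add: field_simps)
  also have "\<dots> \<ge> 0" using x assms by simp
  finally have a: "x - \<alpha> * x / (1 + x) \<ge> 0" .
  have b: "\<alpha> * x / (1 + x) \<ge> 0" using x assms by simp
  have c: "\<beta> * y \<ge> 0" "y - \<mu> * y \<ge> 0" using y assms by (simp_all add: mult_left_le_one_le)
  show ?thesis using a b c by (simp add: z W0_def Let_def)
qed

lemma W0_sum: "fst (W0 \<alpha> \<beta> \<mu> z) + snd (W0 \<alpha> \<beta> \<mu> z) = fst z + snd z + (\<beta> - \<mu>) * snd z"
  by (simp add: W0_def Let_def algebra_simps)

theorem theorem2:
  fixes \<alpha> \<beta> \<mu> x y :: real and p :: nat
  assumes "0 < \<alpha>" "\<alpha> \<le> 1" "0 < \<beta>" "0 < \<mu>" "\<mu> \<le> 1" "\<beta> \<noteq> \<mu>"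
    and "0 \<le> x" "0 \<le> y"
    and "p \<ge> 1"
    and "(W0 \<alpha> \<beta> \<mu> ^^ p) (x, y) = (x, y)"
  shows "W0 \<alpha> \<beta> \<mu> (x, y) = (x, y)"
proof (cases "p = 1")
  case True then show ?thesis using assms(10) by simp
next
  case False
  hence p2: "p \<ge> 2" using assms(9) by simp
  define W where "W = W0 \<alpha> \<beta> \<mu>"
  define z where "z k = (W ^^ k) (x, y)" for k
  have q: "0 \<le> fst (z k) \<and> 0 \<le> snd (z k)" for k
  proof (induction k)
    case 0 then show ?case using assms by (simp add: z_def)
  next
    case (Suc k)
    have "z (Suc k) = W (z k)" by (simp add: z_def)
    then show ?case using W0_quad[OF assms(1-5)] Suc by (simp add: W_def)
  qed
  define S where "S k = fst (z k) + snd (z k)" for k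
  have st: "S (Suc k) = S k + (\<beta> - \<mu>) * snd (z k)" for k
    using W0_sum[of \<alpha> \<beta> \<mu> "z k"] by (simp add: S_def z_def W_def)
  have tel: "S n = S 0 + (\<beta> - \<mu>) * (\<Sum>k<n. snd (z k))" for n
    by (induction n) (simp_all add: st algebra_simps)
  have "S p = S 0" using assms(10) by (simp add: S_def z_def W_def)
  hence "(\<Sum>k<p. snd (z k)) = 0" using tel[of p] assms(6) by simp
  hence all0: "\<forall>k\<in>{..<p}. snd (z k) = 0"
    using q by (subst sum_nonneg_eq_0_iff[symmetric]) auto
  have "snd (z 0) = 0" using all0 p2 by auto
  hence y0: "y = 0" by (simp add: z_def)
  have "snd (z 1) = 0" using all0 p2 by auto
  hence "\<alpha> * x / (1 + x) = 0" using y0 by (simp add: z_def W_def W0_def)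
  hence "x = 0" using assms(1,7) by (simp add: field_simps) 
  with y0 show ?thesis by (simp add: W0_def)
qed

end
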